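(* Let $\mathcal{H}$ be a complex Hilbert space, let $B,X\in\mathcal{B}(\mathcal{H})$, and let $A\in\mathcal{B}(\mathcal{H})$ be positive and invertible. Let $M=\begin{pmatrix} A & X\\ X^{*} & B\end{pmatrix}\in\mathcal{B}(\mathcal{H}\oplus\mathcal{H})$, and assume that $AB-X^{*}X=0$ and $AX=XA$. Then there exists $W\in\mathcal{B}(\mathcal{H})$ such that $X=AW$ and $B=W^{*}AW$, i.e. $$M=\begin{pmatrix} A & AW\\ W^{*}A & W^{*}AW\end{pmatrix}.$$
   Context: Here $\det M:=AB-X^{*}X$. A matrix of the displayed form is called a flat extension of $A$. *)

theory Defs
  imports "HOL-Analysis.Analysis"
begin

class complex_vector = real_vector +
  fixes scaleC :: "complex \<Rightarrow> 'a \<Rightarrow> 'a" (infixr \<open>*\<^sub>C\<close> 75)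
  assumes scaleC_add_right: "a *\<^sub>C (x + y) = a *\<^sub>C x + a *\<^sub>C y"
    and scaleC_add_left: "(a + b) *\<^sub>C x = a *\<^sub>C x + b *\<^sub>C x"
    and scaleC_scaleC: "a *\<^sub>C (b *\<^sub>C x) = (a * b) *\<^sub>C x"
    and scaleC_one: "1 *\<^sub>C x = x"
    and scaleR_scaleC: "r *\<^sub>R x = (complex_of_real r) *\<^sub>C x"

class complex_inner = complex_vector + real_normed_vector +
  fixes cinner :: "'a \<Rightarrow> 'a \<Rightarrow> complex"
  assumes cinner_conj_sym: "cinner x y = cnj (cinner y x)"
    and cinner_add_right: "cinner x (y + z) = cinner x y + cinner x z"
    and cinner_scaleC_right: "cinner x (c *\<^sub>C y) = c * cinner x y"
    and cinner_self_real: "Im (cinner x x) = 0"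
    and cinner_self_nonneg: "0 \<le> Re (cinner x x)"
    and cinner_self_eq_zero: "cinner x x = 0 \<longleftrightarrow> x = 0"
    and norm_cinner: "norm x = sqrt (Re (cinner x x))"

class chilbert_space = complex_inner + complete_space

definition bounded_op :: "('a::complex_inner \<Rightarrow> 'b::complex_inner) \<Rightarrow> bool" where
  "bounded_op T \<longleftrightarrow> bounded_linear T \<and> (\<forall>c x. T (c *\<^sub>C x) = c *\<^sub>C T x)"

definition adj :: "('a::chilbert_space \<Rightarrow> 'a) \<Rightarrow> ('a \<Rightarrow> 'a)" where
  "adj T = (THE S. bounded_op S \<and> (\<forall>x y. cinner (S x) y = cinner x (T y)))"

definition positive_op :: "('a::chilbert_space \<Rightarrow> 'a) \<Rightarrow> bool" where
  "positive_op A \<longleftrightarrow> bounded_op A \<and>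
     (\<forall>x. Im (cinner x (A x)) = 0 \<and> 0 \<le> Re (cinner x (A x)))"

definition invertible_op :: "('a::chilbert_space \<Rightarrow> 'a) \<Rightarrow> bool" where
  "invertible_op A \<longleftrightarrow> (\<exists>S. bounded_op S \<and> A \<circ> S = id \<and> S \<circ> A = id)"

end

theory Submission
  imports Defs
begin


lemma cinner_add_left: "cinner (x + y) z = cinner x z + cinner (y::'a::complex_inner) z"
  by (metis cinner_add_right cinner_conj_sym complex_cnj_add)

lemma cinner_scaleC_left: "cinner (c *\<^sub>C x) y = cnj c * cinner (x::'a::complex_inner) y"
  by (metis cinner_scaleC_right cinner_conj_sym complex_cnj_mult)

lemma cinner_zero_right[simp]: "cinner (x::'a::complex_inner) 0 = 0"
  by (metis add.right_neutral add_cancel_right_right cinner_add_right)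

lemma cinner_zero_left[simp]: "cinner 0 (x::'a::complex_inner) = 0"
  by (metis cinner_conj_sym cinner_zero_right complex_cnj_zero)

lemma cinner_minus_right: "cinner (x::'a::complex_inner) (- y) = - cinner x y"
  by (metis add.right_inverse add_eq_0_iff cinner_add_right cinner_zero_right)

lemma cinner_minus_left: "cinner (- x) (y::'a::complex_inner) = - cinner x y"
  by (metis cinner_conj_sym cinner_minus_right complex_cnj_minus)

lemma cinner_diff_right: "cinner (x::'a::complex_inner) (y - z) = cinner x y - cinner x z"
  by (simp only: diff_conv_add_uminus cinner_add_right cinner_minus_right)

lemma cinner_diff_left: "cinner (x - y) (z::'a::complex_inner) = cinner x z - cinner y z"
  by (simp only: diff_conv_add_uminus cinner_add_left cinner_minus_left)

lemma scaleC_zero_right[simp]: "c *\<^sub>C (0::'a::complex_vector) = 0"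
  by (metis add_cancel_right_right scaleC_add_right add_0)

lemma scaleC_zero_left[simp]: "0 *\<^sub>C (x::'a::complex_vector) = 0"
  by (metis of_real_0 scaleR_scaleC scaleR_zero_left)

lemma scaleC_minus_right: "c *\<^sub>C (- x::'a::complex_vector) = - (c *\<^sub>C x)"
  by (metis add.right_inverse add_eq_0_iff scaleC_add_right scaleC_zero_right)

lemma scaleC_diff_right: "c *\<^sub>C (x - y::'a::complex_vector) = c *\<^sub>C x - c *\<^sub>C y"
  by (simp only: diff_conv_add_uminus scaleC_add_right scaleC_minus_right)

lemma scaleC_diff_left: "(a - b) *\<^sub>C (x::'a::complex_vector) = a *\<^sub>C x - b *\<^sub>C x"
  by (metis add_diff_cancel_right' diff_add_cancel eq_diff_eq scaleC_add_left)

lemma cinner_self: "cinner x (x::'a::complex_inner) = complex_of_real ((norm x)^2)"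
  by (simp add: complex_eq_iff cinner_self_real cinner_self_nonneg norm_cinner)

lemma cinner_self_norm: "Re (cinner x (x::'a::complex_inner)) = (norm x)^2"
  by (simp add: cinner_self)

lemma proj_expand:
  fixes x y :: "'a::complex_inner"
  assumes "y \<noteq> 0"
  shows "Re (cinner (x - (cinner y x / complex_of_real ((norm y)^2)) *\<^sub>C y) (x - (cinner y x / complex_of_real ((norm y)^2)) *\<^sub>C y))
     = (norm x)^2 - (cmod (cinner y x))^2 / (norm y)^2"
proof -
  define n where "n = (norm y)^2"
  have n: "n > 0" using assms by (simp add: n_def)
  define a where "a = cinner y x"
  have cxy: "cinner x y = cnj a" by (simp add: a_def cinner_conj_sym[of x y])
  define t where "t = a / complex_of_real n"
  have "cinner (x - t *\<^sub>C y) (x - t *\<^sub>C y) =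
     cinner x x - t * cinner x y - cnj t * cinner y x + cnj t * t * cinner y y"
    by (simp add: cinner_diff_left cinner_diff_right cinner_scaleC_left cinner_scaleC_right algebra_simps)
  also have "\<dots> = complex_of_real ((norm x)^2) - a * cnj a / complex_of_real n"
  proof -
    have cyy: "cinner y y = complex_of_real n" by (simp add: cinner_self n_def)
    have ct: "cnj t = cnj a / complex_of_real n" by (simp add: t_def)
    have nz: "complex_of_real n \<noteq> 0" using n by simp
    show ?thesis unfolding cyy ct cxy a_def[symmetric] cinner_self[of x] t_def
      using nz by (simp add: divide_simps)
  qed
  finally show ?thesis
    by (simp add: t_def a_def n_def complex_norm_square[symmetric] Re_divide_of_real del: complex_mult_cnj)
qed

lemma cs_ineq: "cmod (cinner x (y::'a::complex_inner)) \<le> norm x * norm y"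
proof (cases "y = 0")
  case True then show ?thesis by simp
next
  case False
  define a where "a = cinner y x"
  have "0 \<le> (norm x)^2 - (cmod a)^2 / (norm y)^2"
    using proj_expand[OF False, of x] cinner_self_nonneg unfolding a_def by metis
  then have "(cmod a)^2 \<le> (norm x)^2 * (norm y)^2" using False by (simp add: field_simps)
  then have "(cmod a)^2 \<le> (norm x * norm y)^2" by (simp add: power_mult_distrib)
  then have "cmod a \<le> norm x * norm y"
    by (rule power2_le_imp_le) simp
  moreover have "cmod (cinner x y) = cmod a" by (metis a_def cinner_conj_sym complex_mod_cnj)
  ultimately show ?thesis by simp
qed

lemma parallelogram:
  fixes u v :: "'a::complex_inner"
  shows "(norm (u + v))^2 + (norm (u - v))^2 = 2 * (norm u)^2 + 2 * (norm v)^2"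
proof -
  have "cinner (u + v) (u + v) + cinner (u - v) (u - v) = 2 * cinner u u + 2 * cinner v v"
    by (simp add: cinner_add_left cinner_add_right cinner_diff_left cinner_diff_right)
  then have "Re (cinner (u + v) (u + v) + cinner (u - v) (u - v)) = Re (2 * cinner u u + 2 * cinner v v)"
    by simp
  then show ?thesis by (simp add: cinner_self_norm)
qed



lemma riesz:
  fixes f :: "'a::chilbert_space \<Rightarrow> complex"
  assumes bl: "bounded_linear f" and cl: "\<And>c x. f (c *\<^sub>C x) = c * f x"
  shows "\<exists>v. \<forall>x. f x = cinner v x"
proof (cases "\<forall>x. f x = 0")
  case True then show ?thesis by (intro exI[of _ 0]) simp
next
  case False
  then obtain x0 where fx0: "f x0 \<noteq> 0" by auto
  interpret f: bounded_linear f by (fact bl)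
  define K where "K = f -` {0}"
  have clK: "closed K" unfolding K_def
    by (rule continuous_closed_vimage) (auto intro: linear_continuous_at bl)
  have K0: "0 \<in> K" by (simp add: K_def f.zero)
  have Kadd: "a + b \<in> K" if "a \<in> K" "b \<in> K" for a b using that by (simp add: K_def f.add)
  have KscR: "r *\<^sub>R a \<in> K" if "a \<in> K" for a r using that by (simp add: K_def f.scaleR)
  have KscC: "c *\<^sub>C a \<in> K" if "a \<in> K" for a c using that by (simp add: K_def cl)
  define D where "D = (\<lambda>k. norm (x0 - k)) ` K"
  define d where "d = Inf D"
  have Dne: "D \<noteq> {}" using K0 by (auto simp: D_def)
  have Dbdd: "bdd_below D" unfolding D_def by (rule bdd_belowI[of _ 0]) auto
  have dle: "d \<le> norm (x0 - k)" if "k \<in> K" for k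
    unfolding d_def D_def by (rule cInf_lower) (use that Dbdd D_def in auto)
  have d0: "0 \<le> d" using dle[OF K0] Dne unfolding d_def D_def
    by (intro cInf_greatest) auto
  have "\<forall>n. \<exists>k\<in>K. norm (x0 - k) < d + 1 / real (Suc n)"
  proof
    fix n
    have "Inf D < d + 1 / real (Suc n)" by (simp add: d_def)
    from cInf_lessD[OF Dne this] show "\<exists>k\<in>K. norm (x0 - k) < d + 1 / real (Suc n)"
      by (auto simp: D_def)
  qed
  then obtain k where kK: "\<And>n. k n \<in> K" and kd: "\<And>n. norm (x0 - k n) < d + 1 / real (Suc n)"
    by metis
  have bound: "(norm (k m - k n))^2 \<le> (4 * d + 2) * (1 / real (Suc n) + 1 / real (Suc m))" for m n
  proof -
    define u where "u = x0 - k n"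
    define v where "v = x0 - k m"
    define e1 where "e1 = 1 / real (Suc n)"
    define e2 where "e2 = 1 / real (Suc m)"
    have e1: "0 \<le> e1" "e1 \<le> 1" by (auto simp: e1_def)
    have e2: "0 \<le> e2" "e2 \<le> 1" by (auto simp: e2_def)
    define mid where "mid = (1/2) *\<^sub>R (k n + k m)"
    have midK: "mid \<in> K" unfolding mid_def by (intro KscR Kadd kK)
    have "u + v = 2 *\<^sub>R (x0 - mid)" unfolding u_def v_def mid_def
      by (simp add: algebra_simps scaleR_add_right scaleR_2)
    then have nuv: "norm (u + v) = 2 * norm (x0 - mid)" by simp
    have "2 * d \<le> norm (u + v)" using dle[OF midK] nuv by simp
    then have "(2 * d)^2 \<le> (norm (u + v))^2" using d0 by (intro power_mono) auto
    then have s1: "4 * d^2 \<le> (norm (u + v))^2" by (simp add: power_mult_distrib)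
    have uv: "u - v = k m - k n" by (simp add: u_def v_def)
    have nu: "(norm u)^2 \<le> (d + e1)^2"
      using kd[of n] by (intro power_mono) (auto simp: u_def e1_def)
    have nv: "(norm v)^2 \<le> (d + e2)^2"
      using kd[of m] by (intro power_mono) (auto simp: v_def e2_def)
    have "(norm (k m - k n))^2 = 2 * (norm u)^2 + 2 * (norm v)^2 - (norm (u + v))^2"
      using parallelogram[of u v] uv by simp
    also have "\<dots> \<le> 2 * (d + e1)^2 + 2 * (d + e2)^2 - 4 * d^2" using nu nv s1 by simp
    also have "\<dots> = 4 * d * (e1 + e2) + 2 * e1 * e1 + 2 * e2 * e2"
      by (simp add: power2_eq_square algebra_simps)
    also have "\<dots> \<le> 4 * d * (e1 + e2) + 2 * e1 + 2 * e2"
      using e1 e2 by (intro add_mono) (auto intro: mult_left_le)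
    also have "\<dots> = (4 * d + 2) * (e1 + e2)" by (simp add: algebra_simps)
    finally show ?thesis by (simp add: e1_def e2_def)
  qed
  have "Cauchy k"
  proof (rule CauchyI)
    fix e :: real assume e: "0 < e"
    obtain M :: nat where M: "2 * (4 * d + 2) / (e^2) < real M"
      using reals_Archimedean2 by blast
    have "\<forall>m\<ge>M. \<forall>n\<ge>M. norm (k m - k n) < e"
    proof (intro allI impI)
      fix m n assume mM: "M \<le> m" and nM: "M \<le> n"
      have i1: "1 / real (Suc n) \<le> 1 / real (Suc M)" using nM by (simp add: frac_le)
      have i2: "1 / real (Suc m) \<le> 1 / real (Suc M)" using mM by (simp add: frac_le)
      have "(norm (k m - k n))^2 \<le> (4 * d + 2) * (2 / real (Suc M))"
      proof -
        have "1 / real (Suc n) + 1 / real (Suc m) \<le> 2 / real (Suc M)" using i1 i2 by simp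
        then have "(4 * d + 2) * (1 / real (Suc n) + 1 / real (Suc m)) \<le> (4 * d + 2) * (2 / real (Suc M))"
          using d0 by (intro mult_left_mono) auto
        then show ?thesis using bound[of m n] by linarith
      qed
      also have "\<dots> < e^2"
      proof -
        have "2 * (4 * d + 2) / (e^2) < real (Suc M)" using M by simp
        then have "2 * (4 * d + 2) < e^2 * real (Suc M)" using e by (simp add: field_simps)
        then show ?thesis by (simp add: field_simps)
      qed
      finally show "norm (k m - k n) < e"
        using e by (simp add: power_less_imp_less_base)
    qed
    then show "\<exists>M. \<forall>m\<ge>M. \<forall>n\<ge>M. norm (k m - k n) < e" by blast
  qed
  then obtain l where kl: "k \<longlonglongrightarrow> l" using Cauchy_convergent_iff convergent_def by blast
  have lK: "l \<in> K" using closed_sequentially[OF clK kK kl] .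
  have "norm (x0 - l) \<le> d"
  proof (rule LIMSEQ_le)
    show "(\<lambda>n. norm (x0 - k n)) \<longlonglongrightarrow> norm (x0 - l)" by (intro tendsto_intros kl)
    show "(\<lambda>n. d + 1 / real (Suc n)) \<longlonglongrightarrow> d"
      using tendsto_add[OF tendsto_const[of d] LIMSEQ_inverse_real_of_nat] by (simp add: inverse_eq_divide)
    show "\<exists>N. \<forall>n\<ge>N. norm (x0 - k n) \<le> d + 1 / real (Suc n)" using kd less_imp_le by blast
  qed
  define z where "z = x0 - l"
  have zmin: "norm z \<le> norm (z - k')" if "k' \<in> K" for k'
  proof -
    have "norm z \<le> d" using \<open>norm (x0 - l) \<le> d\<close> by (simp add: z_def)
    also have "d \<le> norm (x0 - (l + k'))" by (intro dle Kadd lK that)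
    finally show ?thesis by (simp add: z_def algebra_simps)
  qed
  have fz: "f z = f x0" using lK by (simp add: z_def K_def f.diff)
  have z0: "z \<noteq> 0" using fz fx0 f.zero by auto
  have orth: "cinner k' z = 0" if k'K: "k' \<in> K" for k'
  proof (cases "k' = 0")
    case True then show ?thesis by simp
  next
    case False
    define t where "t = cinner k' z / complex_of_real ((norm k')^2)"
    have "z - t *\<^sub>C k' = z - (t *\<^sub>C k')" by simp
    have "norm z \<le> norm (z - t *\<^sub>C k')" by (intro zmin KscC k'K)
    then have "(norm z)^2 \<le> (norm (z - t *\<^sub>C k'))^2" by (simp add: power_mono)
    also have "\<dots> = (norm z)^2 - (cmod (cinner k' z))^2 / (norm k')^2"
      using proj_expand[OF False, of z] by (simp add: t_def cinner_self_norm)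
    finally have "(cmod (cinner k' z))^2 / (norm k')^2 \<le> 0" by simp
    then have "(cmod (cinner k' z))^2 \<le> 0" using False by (simp add: divide_le_0_iff)
    then show ?thesis by simp
  qed
  define N where "N = (norm z)^2"
  have N0: "N \<noteq> 0" using z0 by (simp add: N_def)
  define v where "v = (cnj (f z) / complex_of_real N) *\<^sub>C z"
  have "f x = cinner v x" for x
  proof -
    have wK: "f x *\<^sub>C z - f z *\<^sub>C x \<in> K" by (simp add: K_def f.diff cl)
    have "cinner z (f x *\<^sub>C z - f z *\<^sub>C x) = cnj (cinner (f x *\<^sub>C z - f z *\<^sub>C x) z)"
      by (rule cinner_conj_sym)
    also have "\<dots> = 0" using orth[OF wK] by simp
    finally have "f x * complex_of_real N - f z * cinner z x = 0"
      by (simp add: cinner_diff_right cinner_scaleC_right cinner_self N_def)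
    then have "f x = f z * cinner z x / complex_of_real N" using N0 by (simp add: field_simps)
    then show ?thesis by (simp add: v_def cinner_scaleC_left)
  qed
  then show ?thesis by blast
qed



lemma cinner_ext:
  fixes a b :: "'a::complex_inner"
  assumes "\<And>y. cinner a y = cinner b y"
  shows "a = b"
proof -
  have "cinner (a - b) (a - b) = 0" using assms by (simp add: cinner_diff_left)
  then show ?thesis by (simp add: cinner_self_eq_zero)
qed

lemma bounded_op_comp: "bounded_op T \<Longrightarrow> bounded_op U \<Longrightarrow> bounded_op (T \<circ> U)"
  unfolding bounded_op_def comp_def by (auto intro: bounded_linear_compose)

lemma adj_uniq:
  fixes T :: "'a::chilbert_space \<Rightarrow> 'a"
  assumes "\<forall>x y. cinner (S1 x) y = cinner x (T y)" "\<forall>x y. cinner (S2 x) y = cinner x (T y)"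
  shows "S1 = S2"
  using assms by (intro ext cinner_ext) simp

lemma adj_exists:
  fixes T :: "'a::chilbert_space \<Rightarrow> 'a"
  assumes T: "bounded_op T"
  shows "\<exists>S. bounded_op S \<and> (\<forall>x y. cinner (S x) y = cinner x (T y))"
proof -
  have Tl: "bounded_linear T" and Tc: "\<And>c x. T (c *\<^sub>C x) = c *\<^sub>C T x" using T by (auto simp: bounded_op_def)
  interpret T: bounded_linear T by (fact Tl)
  obtain KT where KT: "KT > 0" "\<And>x. norm (T x) \<le> norm x * KT" using T.pos_bounded by blast
  have "\<exists>v. \<forall>y. cinner x (T y) = cinner v y" for x
  proof (rule riesz)
    show "bounded_linear (\<lambda>y. cinner x (T y))"
    proof (rule bounded_linear_intro)
      show "cinner x (T (a + b)) = cinner x (T a) + cinner x (T b)" for a b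
        by (simp add: T.add cinner_add_right)
      show "cinner x (T (r *\<^sub>R a)) = r *\<^sub>R cinner x (T a)" for r a
        by (simp add: Tc scaleR_scaleC cinner_scaleC_right scaleR_conv_of_real)
      show "norm (cinner x (T a)) \<le> norm a * (norm x * KT)" for a
      proof -
        have "norm (cinner x (T a)) \<le> norm x * norm (T a)" by (simp add: cs_ineq)
        also have "\<dots> \<le> norm x * (norm a * KT)" by (intro mult_left_mono KT) simp
        finally show ?thesis by (simp add: algebra_simps)
      qed
    qed
    show "cinner x (T (c *\<^sub>C y)) = c * cinner x (T y)" for c y
      by (simp add: Tc cinner_scaleC_right)
  qed
  then obtain S where S: "\<And>x y. cinner x (T y) = cinner (S x) y" by metis
  have Sadd: "S (a + b) = S a + S b" for a b
    by (rule cinner_ext) (simp add: S[symmetric] cinner_add_left)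
  have SC: "S (c *\<^sub>C a) = c *\<^sub>C S a" for c a
    by (rule cinner_ext) (simp add: S[symmetric] cinner_scaleC_left)
  have SR: "S (r *\<^sub>R a) = r *\<^sub>R S a" for r a
    by (simp add: scaleR_scaleC SC)
  have Sb: "norm (S x) \<le> norm x * KT" for x
  proof (cases "S x = 0")
    case True then show ?thesis using KT by simp
  next
    case False
    have "(norm (S x))^2 = Re (cinner (S x) (S x))" by (simp add: cinner_self_norm)
    also have "\<dots> = Re (cinner x (T (S x)))" by (simp add: S)
    also have "\<dots> \<le> cmod (cinner x (T (S x)))" by (rule complex_Re_le_cmod)
    also have "\<dots> \<le> norm x * norm (T (S x))" by (rule cs_ineq)
    also have "\<dots> \<le> norm x * (norm (S x) * KT)" by (intro mult_left_mono KT) simp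
    finally have "norm (S x) * norm (S x) \<le> (norm x * KT) * norm (S x)"
      by (simp add: power2_eq_square algebra_simps)
    then show ?thesis using False by simp
  qed
  have "bounded_linear S" by (rule bounded_linear_intro[OF Sadd SR Sb])
  then have "bounded_op S" using SC by (simp add: bounded_op_def)
  then show ?thesis using S by metis
qed

lemma adj_prop:
  fixes T :: "'a::chilbert_space \<Rightarrow> 'a"
  assumes T: "bounded_op T"
  shows "bounded_op (adj T) \<and> (\<forall>x y. cinner (adj T x) y = cinner x (T y))"
proof -
  have "\<exists>!S. bounded_op S \<and> (\<forall>x y. cinner (S x) y = cinner x (T y))"
    using adj_exists[OF T] adj_uniq by blast
  then show ?thesis unfolding adj_def by (rule theI')
qed

lemma adj_eqI:
  fixes T :: "'a::chilbert_space \<Rightarrow> 'a"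
  assumes T: "bounded_op T" and "\<forall>x y. cinner (S x) y = cinner x (T y)"
  shows "adj T = S"
  using adj_uniq[OF conjunct2[OF adj_prop[OF T]] assms(2)] .

lemma adj_comp:
  fixes T U :: "'a::chilbert_space \<Rightarrow> 'a"
  assumes T: "bounded_op T" and U: "bounded_op U"
  shows "adj (T \<circ> U) = adj U \<circ> adj T"
  by (rule adj_eqI) (auto simp: adj_prop T U bounded_op_comp)

lemma positive_selfadj:
  fixes A :: "'a::chilbert_space \<Rightarrow> 'a"
  assumes P: "positive_op A"
  shows "cinner (A x) y = cinner x (A y)"
proof -
  have Al: "bounded_linear A" and Ac: "\<And>c x. A (c *\<^sub>C x) = c *\<^sub>C A x" using P by (auto simp: positive_op_def bounded_op_def)
  interpret A: bounded_linear A by (fact Al)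
  have real: "Im (cinner z (A z)) = 0" for z using P by (simp add: positive_op_def)
  define p where "p = (\<lambda>a b. cinner a (A b))"
  have padd: "p (a + b) (a + b) = p a a + p a b + p b a + p b b" for a b
    by (simp add: p_def A.add cinner_add_left cinner_add_right)
  have h1: "Im (p x y + p y x) = 0"
    using real[of "x + y"] real[of x] real[of y] padd[of x y] by (simp add: p_def)
  have p1: "p x (\<i> *\<^sub>C y) = \<i> * p x y" by (simp add: p_def Ac cinner_scaleC_right)
  have p2: "p (\<i> *\<^sub>C y) x = - \<i> * p y x" by (simp add: p_def cinner_scaleC_left)
  have p3: "p (\<i> *\<^sub>C y) (\<i> *\<^sub>C y) = p y y"
    by (simp add: p_def Ac cinner_scaleC_left cinner_scaleC_right)
  have "Im (p x (\<i> *\<^sub>C y) + p (\<i> *\<^sub>C y) x) = 0"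
    using real[of "x + \<i> *\<^sub>C y"] real[of x] real[of "\<i> *\<^sub>C y"] padd[of x "\<i> *\<^sub>C y"] by (simp add: p_def)
  then have h2: "Re (p x y - p y x) = 0" using p1 p2 by simp
  have "p x y = cnj (p y x)" using h1 h2 by (simp add: complex_eq_iff)
  then show ?thesis by (simp add: p_def cinner_conj_sym[of "A x"])
qed



theorem proposition2p12:
  fixes A B X :: "'a::chilbert_space \<Rightarrow> 'a"
  assumes "bounded_op A" and "bounded_op B" and "bounded_op X"
    and "positive_op A" and "invertible_op A"
    and "A \<circ> B = adj X \<circ> X"
    and "A \<circ> X = X \<circ> A"
  shows "\<exists>W. bounded_op W \<and> X = A \<circ> W \<and> B = adj W \<circ> A \<circ> W"
proof -
  note bA = assms(1) and bX = assms(3) and pA = assms(4)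
  obtain S where bS: "bounded_op S" and AS0: "A \<circ> S = id" and SA0: "S \<circ> A = id"
    using assms(5) by (auto simp: invertible_op_def)
  have AS: "A (S x) = x" for x using fun_cong[OF AS0, of x] by simp
  have SA: "S (A x) = x" for x using fun_cong[OF SA0, of x] by simp
  have adjA: "adj A = A" by (rule adj_eqI[OF bA]) (simp add: positive_selfadj[OF pA])
  have adjS: "adj S = S"
  proof (rule adj_eqI[OF bS], intro allI)
    fix x y
    have "cinner (A (S x)) (S y) = cinner (S x) (A (S y))" by (rule positive_selfadj[OF pA])
    then show "cinner (S x) y = cinner x (S y)" by (simp add: AS)
  qed
  have "adj X \<circ> A = A \<circ> adj X"
    using adj_comp[OF bA bX] adj_comp[OF bX bA] assms(7) adjA by simp
  then have XsA: "adj X (A y) = A (adj X y)" for y by (metis comp_apply)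
  have SXs: "S (adj X y) = adj X (S y)" for y
    by (metis AS SA XsA)
  have AB: "A (B x) = adj X (X x)" for x using fun_cong[OF assms(6), of x] by simp
  define W where "W = S \<circ> X"
  have bW: "bounded_op W" unfolding W_def by (rule bounded_op_comp[OF bS bX])
  have adjW: "adj W = adj X \<circ> S" unfolding W_def by (simp add: adj_comp[OF bS bX] adjS)
  have "X = A \<circ> W" by (rule ext) (simp add: W_def AS)
  moreover have "B = adj W \<circ> A \<circ> W"
  proof (rule ext)
    fix x
    have "(adj W \<circ> A \<circ> W) x = adj X (S (A (S (X x))))" unfolding adjW by (simp add: W_def)
    also have "\<dots> = S (adj X (X x))" by (simp add: SA SXs)
    also have "\<dots> = B x" by (simp add: AB[symmetric] SA)
    finally show "B x = (adj W \<circ> A \<circ> W) x" by simp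
  qed
  ultimately show ?thesis using bW by blast
qed


end
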